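(* Let $I\neq\emptyset$ be any index set. Suppose that $Q$ is a non-empty subset of $l_\infty(I)$ given by an arbitrary system of inequalities, each of the form $\sigma x_i\le C$ or $\sigma x_i+\tau x_j\le C$ with $i,j\in I$, $|\sigma|=|\tau|=1$ and $C\in\mathbb{R}$. Then $Q$, with the metric induced by the sup norm, is injective.
   Context: $l_\infty(I)$ is the Banach space of bounded real families $(x_i)_{i\in I}$ with the sup norm. A metric space $Y$ is injective if for every metric space $B$, every $A\subset B$ and every 1-Lipschitz $f\colon A\to Y$ there is a 1-Lipschitz extension $B\to Y$. *)

theory Defs
  imports "HOL-Analysis.Analysis"
begin

text \<open>The index set I is represented by the (arbitrary, nonempty) type 'i.
  l_infinity(I) = bounded real families indexed by 'i, with the sup-norm distance.\<close>

definition linf :: "('i \<Rightarrow> real) set" where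
  "linf = {x. bounded (range x)}"

definition linf_dist :: "('i \<Rightarrow> real) \<Rightarrow> ('i \<Rightarrow> real) \<Rightarrow> real" where
  "linf_dist x y = (SUP i. \<bar>x i - y i\<bar>)"

definition ineq_system_set ::
  "('i \<times> real \<times> real) set \<Rightarrow> ('i \<times> 'i \<times> real \<times> real \<times> real) set \<Rightarrow> ('i \<Rightarrow> real) set" where
  "ineq_system_set S1 S2 =
     {x \<in> linf. (\<forall>(i, \<sigma>, C) \<in> S1. \<sigma> * x i \<le> C) \<and>
                 (\<forall>(i, j, \<sigma>, \<tau>, C) \<in> S2. \<sigma> * x i + \<tau> * x j \<le> C)}"

text \<open>Injectivity of the metric space (Y, dY), tested against all metric spaces
  (B, dB) whose points live in the type 'b: every 1-Lipschitz map from a subset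
  A of B into Y extends to a 1-Lipschitz map B \<rightarrow> Y.\<close>

definition injective_wrt :: "'b set \<Rightarrow> ('b \<Rightarrow> 'b \<Rightarrow> real) \<Rightarrow> 'y set \<Rightarrow> ('y \<Rightarrow> 'y \<Rightarrow> real) \<Rightarrow> bool" where
  "injective_wrt B dB Y dY \<longleftrightarrow>
     (\<forall>A f. A \<subseteq> B \<and> f \<in> A \<rightarrow> Y \<and> (\<forall>a\<in>A. \<forall>a'\<in>A. dY (f a) (f a') \<le> dB a a') \<longrightarrow>
        (\<exists>g. g \<in> B \<rightarrow> Y \<and> (\<forall>a\<in>A. g a = f a) \<and> (\<forall>b\<in>B. \<forall>b'\<in>B. dY (g b) (g b') \<le> dB b b')))"

end

theory Submission
  imports Defs
begin

lemma linf_bound: "x \<in> linf \<Longrightarrow> \<exists>M. \<forall>i. \<bar>x i\<bar> \<le> M"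
  unfolding linf_def by (auto simp: bounded_iff)

lemma linf_intro: "(\<And>i. \<bar>x i - y i\<bar> \<le> r) \<Longrightarrow> y \<in> linf \<Longrightarrow> x \<in> linf"
proof -
  assume h: "\<And>i. \<bar>x i - y i\<bar> \<le> r" and y: "y \<in> linf"
  then obtain M where "\<forall>i. \<bar>y i\<bar> \<le> M" using linf_bound by blast
  then have "\<forall>i. \<bar>x i\<bar> \<le> M + r"
  proof (intro allI)
    fix i assume "\<forall>i. \<bar>y i\<bar> \<le> M"
    then have "\<bar>y i\<bar> \<le> M" by blast
    then show "\<bar>x i\<bar> \<le> M + r" using h[of i] by linarith
  qed
  then show ?thesis unfolding linf_def bounded_iff by auto
qed

lemma linf_dist_le_iff:
  assumes "x \<in> linf" "y \<in> linf"
  shows "linf_dist x y \<le> r \<longleftrightarrow> (\<forall>i. \<bar>x i - y i\<bar> \<le> r)"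
proof
  obtain M1 where M1: "\<forall>i. \<bar>x i\<bar> \<le> M1" using linf_bound assms by blast
  obtain M2 where M2: "\<forall>i. \<bar>y i\<bar> \<le> M2" using linf_bound assms by blast
  have bdd: "bdd_above (range (\<lambda>i. \<bar>x i - y i\<bar>))"
    by (rule bdd_aboveI[where M="M1+M2"]) (use M1 M2 in \<open>auto simp: abs_le_iff\<close>, (metis add_mono diff_conv_add_uminus add.commute)+)
  assume "linf_dist x y \<le> r"
  then show "\<forall>i. \<bar>x i - y i\<bar> \<le> r"
    unfolding linf_dist_def using cSUP_upper[OF _ bdd] by (meson UNIV_I order_trans)
next
  assume "\<forall>i. \<bar>x i - y i\<bar> \<le> r"
  then show "linf_dist x y \<le> r" unfolding linf_dist_def by (auto intro: cSUP_least)
qed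

definition val :: "('i \<Rightarrow> real) \<Rightarrow> 'i \<times> bool \<Rightarrow> real" where
  "val y p = (if snd p then y (fst p) else - y (fst p))"

lemma val_diff: "\<bar>val x p - val y p\<bar> = \<bar>x (fst p) - y (fst p)\<bar>"
  unfolding val_def by auto

lemma aux1: "a - b \<le> 2*C \<Longrightarrow> s = (a - b)/2 \<Longrightarrow> s \<le> (C::real)" by (simp add: field_simps)
lemma aux2: "a - b \<le> C \<Longrightarrow> c - d \<le> C \<Longrightarrow> s = (a - d)/2 \<Longrightarrow> t = (c - b)/2 \<Longrightarrow> s + t \<le> (C::real)"
  by (simp add: field_simps)

theorem proposition2p4:
  fixes S1 :: "('i \<times> real \<times> real) set"
    and S2 :: "('i \<times> 'i \<times> real \<times> real \<times> real) set"
    and B :: "'b set" and dB :: "'b \<Rightarrow> 'b \<Rightarrow> real"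
  assumes "\<forall>(i, \<sigma>, C) \<in> S1. \<bar>\<sigma>\<bar> = 1"
    and "\<forall>(i, j, \<sigma>, \<tau>, C) \<in> S2. \<bar>\<sigma>\<bar> = 1 \<and> \<bar>\<tau>\<bar> = 1"
    and "ineq_system_set S1 S2 \<noteq> {}"
    and "Metric_space B dB"
  shows "injective_wrt B dB (ineq_system_set S1 S2) linf_dist"
  unfolding injective_wrt_def
proof (intro allI impI)
  define Q where "Q = ineq_system_set S1 S2"
  interpret M: Metric_space B dB by fact
  have QL: "Q \<subseteq> linf" unfolding Q_def ineq_system_set_def by auto
  obtain y0 where y0: "y0 \<in> Q" using assms(3) Q_def by auto
  fix A f
  assume H: "A \<subseteq> B \<and> f \<in> A \<rightarrow> ineq_system_set S1 S2 \<and>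
      (\<forall>a\<in>A. \<forall>a'\<in>A. linf_dist (f a) (f a') \<le> dB a a')"
  have AB: "A \<subseteq> B" and fQ: "\<And>a. a \<in> A \<Longrightarrow> f a \<in> Q" using H Q_def by auto
  have fL: "\<And>a a' i. a \<in> A \<Longrightarrow> a' \<in> A \<Longrightarrow> \<bar>f a i - f a' i\<bar> \<le> dB a a'"
    using H fQ QL linf_dist_le_iff by blast
  show "\<exists>g. g \<in> B \<rightarrow> ineq_system_set S1 S2 \<and> (\<forall>a\<in>A. g a = f a) \<and>
          (\<forall>b\<in>B. \<forall>b'\<in>B. linf_dist (g b) (g b') \<le> dB b b')"
  proof (cases "A = {}")
    case True
    have "linf_dist y0 y0 \<le> dB b b'" for b b'
      using linf_dist_le_iff[of y0 y0 "dB b b'"] y0 QL by auto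
    then show ?thesis using True y0 Q_def by (intro exI[of _ "\<lambda>_. y0"]) auto
  next
    case False
    then obtain a0 where a0: "a0 \<in> A" by auto
    define bnd where "bnd q p = bdd_above ((\<lambda>y. val y p - val y q) ` Q)" for q p
    define D where "D q p = Sup ((\<lambda>y. val y p - val y q) ` Q)" for q p
    define T where "T b p = {val (f a) q + dB a b + D q p | a q. a \<in> A \<and> bnd q p}" for b p
    define u where "u b p = Inf (T b p)" for b p
    define g where "g b = (\<lambda>i. (u b (i, True) - u b (i, False)) / 2)" for b
    have Dge: "bnd q p \<Longrightarrow> y \<in> Q \<Longrightarrow> val y p - val y q \<le> D q p" for q p y
      unfolding bnd_def D_def by (rule cSup_upper) auto
    have Dle: "(\<And>y. y \<in> Q \<Longrightarrow> val y p - val y q \<le> C) \<Longrightarrow> bnd q p \<and> D q p \<le> C" for q p C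
      unfolding bnd_def D_def using y0 by (auto intro!: cSup_least bdd_aboveI2)
    have Dtri: "bnd q' q \<Longrightarrow> bnd q p \<Longrightarrow> bnd q' p \<and> D q' p \<le> D q' q + D q p" for q' q p
    proof -
      assume h: "bnd q' q" "bnd q p"
      show ?thesis
      proof (rule Dle)
        fix y assume "y \<in> Q"
        then show "val y p - val y q' \<le> D q' q + D q p"
          using Dge[OF h(1)] Dge[OF h(2)] by force
      qed
    qed
    have Dpp: "bnd p p \<and> D p p \<le> 0" for p using Dle[of p p 0] by auto
    have Tlow: "b \<in> B \<Longrightarrow> a \<in> A \<Longrightarrow> t \<in> T b p \<Longrightarrow> val (f a) p - dB a b \<le> t" for b a t p
    proof -
      assume b: "b \<in> B" and a: "a \<in> A" and "t \<in> T b p"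
      then obtain a' q where t: "t = val (f a') q + dB a' b + D q p" "a' \<in> A" "bnd q p"
        unfolding T_def by auto
      have "val (f a') p - val (f a') q \<le> D q p" using Dge[OF t(3) fQ[OF t(2)]] .
      moreover have "\<bar>val (f a) p - val (f a') p\<bar> \<le> dB a a'" using val_diff fL[OF a t(2)] by metis
      moreover have "dB a a' \<le> dB a b + dB b a'" using M.triangle a t(2) b AB by blast
      moreover have "dB b a' = dB a' b" using M.commute by blast
      ultimately show ?thesis using t(1) by linarith
    qed
    have Tmem: "a \<in> A \<Longrightarrow> val (f a) p + dB a b \<in> T b p" for a b p
    proof -
      assume a: "a \<in> A"
      have "val (f a) p + dB a b + D p p \<in> T b p" unfolding T_def using a Dpp by blast
      then show ?thesis using Dpp[of p] Dle[of p p 0] Dge[of p p y0] y0 by (smt (verit))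
    qed
    have Tne: "T b p \<noteq> {}" for b p using Tmem[OF a0] by blast
    have Tbdd: "b \<in> B \<Longrightarrow> bdd_below (T b p)" for b p
      using Tlow[OF _ a0, of b _ p] by (intro bdd_belowI[where m="val (f a0) p - dB a0 b"]) auto
    have Ulow: "b \<in> B \<Longrightarrow> a \<in> A \<Longrightarrow> val (f a) p - dB a b \<le> u b p" for b a p
      unfolding u_def using Tne[of b p] Tlow[of b a _ p] by (intro cInf_greatest) auto
    have Uup: "b \<in> B \<Longrightarrow> a \<in> A \<Longrightarrow> u b p \<le> val (f a) p + dB a b" for b a p
      unfolding u_def using Tmem[of a p b] Tbdd[of b p] by (intro cInf_lower) auto
    have U2: "b \<in> B \<Longrightarrow> b' \<in> B \<Longrightarrow> u b p \<le> u b' p + dB b b'" for b b' p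
    proof -
      assume b: "b \<in> B" and b': "b' \<in> B"
      have "u b p - dB b b' \<le> t" if "t \<in> T b' p" for t
      proof -
        obtain a q where t: "t = val (f a) q + dB a b' + D q p" "a \<in> A" "bnd q p"
          using \<open>t \<in> T b' p\<close> unfolding T_def by auto
        have "val (f a) q + dB a b + D q p \<in> T b p" unfolding T_def using t by blast
        then have "u b p \<le> val (f a) q + dB a b + D q p" unfolding u_def using Tbdd[OF b] by (rule cInf_lower)
        moreover have "dB a b \<le> dB a b' + dB b' b" using M.triangle t(2) AB b b' by blast
        ultimately show ?thesis using t(1) M.commute[of b b'] by linarith
      qed
      then have "u b p - dB b b' \<le> u b' p" unfolding u_def[of b' p] using Tne by (intro cInf_greatest) auto
      then show ?thesis by linarith
    qed
    have U3: "b \<in> B \<Longrightarrow> bnd q p \<Longrightarrow> u b p \<le> u b q + D q p" for b q p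
    proof -
      assume b: "b \<in> B" and qp: "bnd q p"
      have "u b p - D q p \<le> t" if "t \<in> T b q" for t
      proof -
        obtain a q' where t: "t = val (f a) q' + dB a b + D q' q" "a \<in> A" "bnd q' q"
          using \<open>t \<in> T b q\<close> unfolding T_def by auto
        have tr: "bnd q' p" "D q' p \<le> D q' q + D q p" using Dtri[OF t(3) qp] by auto
        have "val (f a) q' + dB a b + D q' p \<in> T b p" unfolding T_def using t tr by blast
        then have "u b p \<le> val (f a) q' + dB a b + D q' p" unfolding u_def using Tbdd[OF b] by (rule cInf_lower)
        then show ?thesis using t(1) tr by linarith
      qed
      then have "u b p - D q p \<le> u b q" unfolding u_def[of b q] using Tne by (intro cInf_greatest) auto
      then show ?thesis by linarith
    qed
    have edge: "b \<in> B \<Longrightarrow> (\<And>y. y \<in> Q \<Longrightarrow> val y p - val y q \<le> C) \<Longrightarrow> u b p - u b q \<le> C" for b p q C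
      using Dle U3 by (smt (verit))
    have gA: "g a = f a" if a: "a \<in> A" for a
    proof
      fix i
      have "u a p = val (f a) p" for p using Ulow[of a a p] Uup[of a a p] a AB M.zero by force
      then show "g a i = f a i" unfolding g_def val_def by simp
    qed
    have gdiff: "\<bar>g b i - g b' i\<bar> \<le> dB b b'" if "b \<in> B" "b' \<in> B" for b b' i
    proof -
      have "u b (i,True) \<le> u b' (i,True) + dB b b'" "u b' (i,True) \<le> u b (i,True) + dB b b'"
        "u b (i,False) \<le> u b' (i,False) + dB b b'" "u b' (i,False) \<le> u b (i,False) + dB b b'"
        using U2[OF that] U2[OF that(2,1)] M.commute[of b b'] by metis+
      moreover have "g b i - g b' i = ((u b (i,True) - u b' (i,True)) + (u b' (i,False) - u b (i,False)))/2"
        unfolding g_def by (simp add: field_simps)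
      ultimately show ?thesis unfolding abs_le_iff by (simp add: field_simps)
    qed
    have sval: "\<bar>\<sigma>\<bar> = (1::real) \<Longrightarrow> \<sigma> * y i = val y (i, \<sigma> = 1)
        \<and> - (\<sigma> * y i) = val y (i, \<not> \<sigma> = 1)" for \<sigma> y i
      unfolding val_def by (cases "\<sigma> \<ge> 0") auto
    have gsval: "\<bar>\<sigma>\<bar> = (1::real) \<Longrightarrow> \<sigma> * g b i = (u b (i, \<sigma> = 1) - u b (i, \<not> \<sigma> = 1)) / 2" for \<sigma> b i
      unfolding g_def by (cases "\<sigma> \<ge> 0") auto
    have gQ: "g b \<in> Q" if b: "b \<in> B" for b
    proof -
      have "\<bar>g b i - f a0 i\<bar> \<le> dB a0 b" for i
        using Ulow[OF b a0, of "(i,True)"] Uup[OF b a0, of "(i,True)"]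
          Ulow[OF b a0, of "(i,False)"] Uup[OF b a0, of "(i,False)"]
        unfolding g_def val_def by (auto simp: abs_le_iff field_simps)
      then have L: "g b \<in> linf" using linf_intro fQ[OF a0] QL by blast
      have S1: "\<sigma> * g b i \<le> C" if "(i, \<sigma>, C) \<in> S1" for i \<sigma> C
      proof -
        have s: "\<bar>\<sigma>\<bar> = 1" using assms(1) that by auto
        have "u b (i, \<sigma> = 1) - u b (i, \<not> \<sigma> = 1) \<le> 2 * C"
        proof (rule edge[OF b])
          fix y assume "y \<in> Q"
          then have "\<sigma> * y i \<le> C" using that unfolding Q_def ineq_system_set_def by auto
          then show "val y (i, \<sigma> = 1) - val y (i, \<not> \<sigma> = 1) \<le> 2 * C" using sval[OF s, of y i] by linarith
        qed
        then show ?thesis using gsval[OF s, of b i] aux1 by blast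
      qed
      have S2: "\<sigma> * g b i + \<tau> * g b j \<le> C" if "(i, j, \<sigma>, \<tau>, C) \<in> S2" for i j \<sigma> \<tau> C
      proof -
        have s: "\<bar>\<sigma>\<bar> = 1" "\<bar>\<tau>\<bar> = 1" using assms(2) that by auto
        have yc: "\<sigma> * y i + \<tau> * y j \<le> C" if "y \<in> Q" for y
          using that \<open>(i, j, \<sigma>, \<tau>, C) \<in> S2\<close> unfolding Q_def ineq_system_set_def by auto
        have e1: "u b (i, \<sigma> = 1) - u b (j, \<not> \<tau> = 1) \<le> C"
        proof (rule edge[OF b])
          fix y assume "y \<in> Q"
          then show "val y (i, \<sigma> = 1) - val y (j, \<not> \<tau> = 1) \<le> C"
            using yc sval[OF s(1), of y i] sval[OF s(2), of y j] by force
        qed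
        have e2: "u b (j, \<tau> = 1) - u b (i, \<not> \<sigma> = 1) \<le> C"
        proof (rule edge[OF b])
          fix y assume "y \<in> Q"
          then show "val y (j, \<tau> = 1) - val y (i, \<not> \<sigma> = 1) \<le> C"
            using yc sval[OF s(1), of y i] sval[OF s(2), of y j] by force
        qed
        show ?thesis using aux2[OF e1 e2 gsval[OF s(1), of b i] gsval[OF s(2), of b j]] .
      qed
      show ?thesis unfolding Q_def ineq_system_set_def using L S1 S2 by auto
    qed
    show ?thesis
    proof (intro exI[of _ g] conjI ballI)
      show "g \<in> B \<rightarrow> ineq_system_set S1 S2" using gQ Q_def by auto
      show "g a = f a" if "a \<in> A" for a using gA that .
      show "linf_dist (g b) (g b') \<le> dB b b'" if "b \<in> B" "b' \<in> B" for b b'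
        using linf_dist_le_iff gQ QL that gdiff by blast
    qed
  qed
qed

end
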